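(* Let $G_1,G_2$ be finite simple graphs with the same number of vertices. Then $\dim_{\mathbb{C}} Z(A_{G_1})=\dim_{\mathbb{C}} Z(A_{G_2})$ (i.e. they belong to the same Clifford class) if and only if their adjacency matrices, regarded as matrices over the field $\mathbb{F}_2$, have the same rank.
   Context: All graphs are finite, with no loops and no multiple edges. For a graph $G$ with vertices numbered $1,\dots,n$, the Clifford graph algebra $A_G$ is the unital associative $\mathbb{C}$-algebra generated by $e_1,\dots,e_n$ subject to the relations $e_i^2=-1$ for all $i$; $e_ie_j=-e_je_i$ if $i\neq j$ and vertices $i,j$ are adjacent; and $e_ie_j=e_je_i$ if $i\ne j$ and vertices $i,j$ are not adjacent. $Z(A)$ denotes the center. The adjacency matrix of $G$ is the $n\times n$ matrix $(a_{ij})$ with $a_{ij}=1$ if vertices $i,j$ are adjacent and $a_{ij}=0$ otherwise (so $a_{ii}=0$). *)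

theory Defs
  imports Main "HOL-Library.Function_Algebras" "HOL-Library.Z2" "Jordan_Normal_Form.DL_Rank"
begin

definition simple_graph :: "nat \<Rightarrow> (nat \<Rightarrow> nat \<Rightarrow> bool) \<Rightarrow> bool" where
  "simple_graph n E \<longleftrightarrow> (\<forall>i j. E i j \<longrightarrow> i < n \<and> j < n \<and> i \<noteq> j \<and> E j i)"

text \<open>Free associative unital C-algebra on letters: finitely supported functions
  from words (lists of letters) to complex numbers, with concatenation product.\<close>
definition fa_scale :: "complex \<Rightarrow> (nat list \<Rightarrow> complex) \<Rightarrow> (nat list \<Rightarrow> complex)" where
  "fa_scale c p = (\<lambda>w. c * p w)"

definition fa_mult :: "(nat list \<Rightarrow> complex) \<Rightarrow> (nat list \<Rightarrow> complex) \<Rightarrow> (nat list \<Rightarrow> complex)" where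
  "fa_mult p q = (\<lambda>w. \<Sum>k\<le>length w. p (take k w) * q (drop k w))"

definition fa_one :: "nat list \<Rightarrow> complex" where
  "fa_one = (\<lambda>w. if w = [] then 1 else 0)"

definition fa_gen :: "nat \<Rightarrow> nat list \<Rightarrow> complex" where
  "fa_gen i = (\<lambda>w. if w = [i] then 1 else 0)"

definition free_alg :: "nat \<Rightarrow> (nat list \<Rightarrow> complex) set" where
  "free_alg n = {p. finite {w. p w \<noteq> 0} \<and> (\<forall>w. p w \<noteq> 0 \<longrightarrow> set w \<subseteq> {..<n})}"

text \<open>Defining relations of the Clifford graph algebra A_G (as elements that must vanish).\<close>
definition cga_rels :: "nat \<Rightarrow> (nat \<Rightarrow> nat \<Rightarrow> bool) \<Rightarrow> (nat list \<Rightarrow> complex) set" where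
  "cga_rels n E =
     {fa_mult (fa_gen i) (fa_gen i) + fa_one | i. i < n}
   \<union> {fa_mult (fa_gen i) (fa_gen j) + fa_mult (fa_gen j) (fa_gen i) | i j. i < n \<and> j < n \<and> i \<noteq> j \<and> E i j}
   \<union> {fa_mult (fa_gen i) (fa_gen j) - fa_mult (fa_gen j) (fa_gen i) | i j. i < n \<and> j < n \<and> i \<noteq> j \<and> \<not> E i j}"

definition cga_ideal :: "nat \<Rightarrow> (nat \<Rightarrow> nat \<Rightarrow> bool) \<Rightarrow> (nat list \<Rightarrow> complex) set" where
  "cga_ideal n E = module.span fa_scale
     {fa_mult (fa_mult a r) b | a r b. a \<in> free_alg n \<and> r \<in> cga_rels n E \<and> b \<in> free_alg n}"

text \<open>Preimage in the free algebra of the center Z(A_G), A_G = free_alg n / cga_ideal n E.\<close>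
definition cga_center_lift :: "nat \<Rightarrow> (nat \<Rightarrow> nat \<Rightarrow> bool) \<Rightarrow> (nat list \<Rightarrow> complex) set" where
  "cga_center_lift n E = {x \<in> free_alg n. \<forall>y \<in> free_alg n. fa_mult x y - fa_mult y x \<in> cga_ideal n E}"

text \<open>Dimension of the quotient space V/W: maximal number of vectors of V linearly
  independent modulo W.\<close>
definition quot_dim :: "(nat list \<Rightarrow> complex) set \<Rightarrow> (nat list \<Rightarrow> complex) set \<Rightarrow> nat" where
  "quot_dim V W = Sup {card B | B. B \<subseteq> V \<and> finite B \<and> \<not> module.dependent fa_scale B
                          \<and> module.span fa_scale B \<inter> W = {0}}"

definition cga_center_dim :: "nat \<Rightarrow> (nat \<Rightarrow> nat \<Rightarrow> bool) \<Rightarrow> nat" where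
  "cga_center_dim n E = quot_dim (cga_center_lift n E) (cga_ideal n E)"

definition adj_mat_F2 :: "nat \<Rightarrow> (nat \<Rightarrow> nat \<Rightarrow> bool) \<Rightarrow> bit mat" where
  "adj_mat_F2 n E = mat n n (\<lambda>(i, j). if E i j then 1 else 0)"

end

theory Submission
  imports Defs
begin


interpretation fa: vector_space fa_scale
  by unfold_locales (auto simp: fa_scale_def fun_eq_iff algebra_simps)

definition dl :: "nat list \<Rightarrow> nat list \<Rightarrow> complex" where
  "dl u = (\<lambda>w. if w = u then 1 else 0)"

lemma fa_gen_dl: "fa_gen i = dl [i]" and fa_one_dl: "fa_one = dl []"
  by (auto simp: fa_gen_def fa_one_def dl_def)

lemma dl_inj: "dl a = dl b \<Longrightarrow> a = b"
  unfolding dl_def by (metis zero_neq_one)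

lemma sum_fun: "(sum f A) x = (\<Sum>a\<in>A. f a x)"
  by (induct A rule: infinite_finite_induct) auto

lemma fa_scale_apply[simp]: "fa_scale c p w = c * p w"
  by (simp add: fa_scale_def)

lemma fa_mult_dl: "fa_mult (dl u) (dl v) = dl (u @ v)"
proof
  fix w
  have eq: "(if take k w = u then 1 else 0) * (if drop k w = v then 1 else 0)
        = (if k = length u then (if w = u @ v then 1 else 0) else (0::complex))" if "k \<le> length w" for k
  proof -
    have iff: "(take k w = u \<and> drop k w = v) \<longleftrightarrow> (w = u @ v \<and> k = length u)"
    proof
      assume h: "take k w = u \<and> drop k w = v"
      then have "w = u @ v" by (metis append_take_drop_id)
      moreover have "k = length u" using h that by auto
      ultimately show "w = u @ v \<and> k = length u" by simp
    next
      assume "w = u @ v \<and> k = length u" thus "take k w = u \<and> drop k w = v" by simp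
    qed
    have a: "(if take k w = u then 1 else 0) * (if drop k w = v then 1 else 0)
       = (if take k w = u \<and> drop k w = v then 1 else (0::complex))" by simp
    show ?thesis unfolding a iff by auto
  qed
  have "fa_mult (dl u) (dl v) w = (\<Sum>k\<le>length w. (if k = length u then (if w = u @ v then 1 else 0) else (0::complex)))"
    unfolding fa_mult_def dl_def using eq by (intro sum.cong) auto
  also have "\<dots> = dl (u @ v) w"
    by (auto simp: dl_def)
  finally show "fa_mult (dl u) (dl v) w = dl (u @ v) w" .
qed

lemma fa_mult_add_left: "fa_mult (p + q) r = fa_mult p r + fa_mult q r"
  by (auto simp: fa_mult_def fun_eq_iff sum.distrib algebra_simps)
lemma fa_mult_add_right: "fa_mult r (p + q) = fa_mult r p + fa_mult r q"
  by (auto simp: fa_mult_def fun_eq_iff sum.distrib algebra_simps)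
lemma fa_mult_diff_left: "fa_mult (p - q) r = fa_mult p r - fa_mult q r"
  by (auto simp: fa_mult_def fun_eq_iff sum_subtractf algebra_simps)
lemma fa_mult_diff_right: "fa_mult r (p - q) = fa_mult r p - fa_mult r q"
  by (auto simp: fa_mult_def fun_eq_iff sum_subtractf algebra_simps)
lemma fa_mult_scale_left: "fa_mult (fa_scale c p) r = fa_scale c (fa_mult p r)"
  by (auto simp: fa_mult_def fun_eq_iff sum_distrib_left algebra_simps)
lemma fa_mult_scale_right: "fa_mult r (fa_scale c p) = fa_scale c (fa_mult r p)"
  by (auto simp: fa_mult_def fun_eq_iff sum_distrib_left algebra_simps)
lemma fa_mult_zero_left: "fa_mult 0 r = 0"
  by (auto simp: fa_mult_def fun_eq_iff)
lemma fa_mult_zero_right: "fa_mult r 0 = 0"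
  by (auto simp: fa_mult_def fun_eq_iff)
lemma fa_mult_sum_left: "fa_mult (sum f A) r = (\<Sum>a\<in>A. fa_mult (f a) r)"
  apply (rule ext) apply (simp add: fa_mult_def sum_fun sum_distrib_right) by (rule sum.swap)
lemma fa_mult_sum_right: "fa_mult r (sum f A) = (\<Sum>a\<in>A. fa_mult r (f a))"
  apply (rule ext) apply (simp add: fa_mult_def sum_fun sum_distrib_left) by (rule sum.swap)

definition supp :: "(nat list \<Rightarrow> complex) \<Rightarrow> nat list set" where
  "supp p = {w. p w \<noteq> 0}"

lemma expand: "finite (supp p) \<Longrightarrow> p = (\<Sum>w\<in>supp p. fa_scale (p w) (dl w))"
proof
  fix x assume f: "finite (supp p)"
  have "(\<Sum>w\<in>supp p. fa_scale (p w) (dl w)) x = (\<Sum>w\<in>supp p. if w = x then p w else 0)"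
    unfolding sum_fun by (intro sum.cong) (auto simp: dl_def)
  also have "\<dots> = p x" using f by (auto simp: sum.delta' supp_def)
  finally show "p x = (\<Sum>w\<in>supp p. fa_scale (p w) (dl w)) x" by simp
qed

lemma supp_add: "supp (p + q) \<subseteq> supp p \<union> supp q" by (auto simp: supp_def)
lemma supp_diff: "supp (p - q) \<subseteq> supp p \<union> supp q" by (auto simp: supp_def)
lemma supp_scale: "supp (fa_scale c p) \<subseteq> supp p" by (auto simp: supp_def)
lemma supp_dl: "supp (dl w) = {w}" by (auto simp: supp_def dl_def)
lemma supp_zero: "supp 0 = {}" by (auto simp: supp_def)
lemma fin_supp_add: "finite (supp p) \<Longrightarrow> finite (supp q) \<Longrightarrow> finite (supp (p + q))"
  by (meson finite_UnI finite_subset supp_add)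
lemma fin_supp_diff: "finite (supp p) \<Longrightarrow> finite (supp q) \<Longrightarrow> finite (supp (p - q))"
  by (meson finite_UnI finite_subset supp_diff)
lemma fin_supp_scale: "finite (supp p) \<Longrightarrow> finite (supp (fa_scale c p))"
  by (meson finite_subset supp_scale)
lemma fin_supp_sum: "(\<And>a. a \<in> A \<Longrightarrow> finite (supp (f a))) \<Longrightarrow> finite (supp (sum f A))"
  by (induct A rule: infinite_finite_induct) (auto simp: supp_zero intro: fin_supp_add)

lemma free_alg_supp: "p \<in> free_alg n \<Longrightarrow> finite (supp p)"
  by (simp add: free_alg_def supp_def)

lemma fa_mult_expand:
  assumes "finite (supp p)" "finite (supp q)"
  shows "fa_mult p q = (\<Sum>u\<in>supp p. \<Sum>v\<in>supp q. fa_scale (p u * q v) (dl (u @ v)))"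
proof -
  have "fa_mult p q = fa_mult (\<Sum>u\<in>supp p. fa_scale (p u) (dl u)) (\<Sum>v\<in>supp q. fa_scale (q v) (dl v))"
    by (intro arg_cong2[where f=fa_mult] expand assms)
  also have "\<dots> = (\<Sum>u\<in>supp p. \<Sum>v\<in>supp q. fa_scale (p u * q v) (dl (u @ v)))"
    by (simp add: fa_mult_sum_left fa_mult_sum_right fa_mult_scale_left fa_mult_scale_right fa_mult_dl
        fa.scale_sum_right mult.commute) (rule sum.swap)
  finally show ?thesis .
qed

lemma fin_supp_mult: "finite (supp p) \<Longrightarrow> finite (supp q) \<Longrightarrow> finite (supp (fa_mult p q))"
  apply (subst fa_mult_expand, assumption, assumption)
  apply (intro fin_supp_sum fin_supp_scale)
  apply (simp add: supp_dl)
  done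

definition od :: "nat list \<Rightarrow> nat set" where "od w = {a. odd (count_list w a)}"
definition PP :: "(nat \<Rightarrow> nat \<Rightarrow> bool) \<Rightarrow> nat \<Rightarrow> nat \<Rightarrow> bool" where
  "PP E a b \<longleftrightarrow> (b < a \<and> E a b) \<or> a = b"
fun nn :: "(nat \<Rightarrow> nat \<Rightarrow> bool) \<Rightarrow> nat list \<Rightarrow> nat" where
  "nn E [] = 0" | "nn E (a # w) = length (filter (PP E a) w) + nn E w"
definition cross :: "(nat \<Rightarrow> nat \<Rightarrow> bool) \<Rightarrow> nat list \<Rightarrow> nat list \<Rightarrow> nat" where
  "cross E u v = (\<Sum>a\<leftarrow>u. length (filter (PP E a) v))"
definition sg :: "(nat \<Rightarrow> nat \<Rightarrow> bool) \<Rightarrow> nat list \<Rightarrow> complex" where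
  "sg E w = (-1) ^ nn E w"

lemma nn_append: "nn E (u @ v) = nn E u + nn E v + cross E u v"
  by (induct u) (auto simp: cross_def)
lemma cross_append_right: "cross E u (x @ y) = cross E u x + cross E u y"
  unfolding cross_def by (induct u) auto
lemma cross_Cons_left: "cross E (a # u) v = length (filter (PP E a) v) + cross E u v"
  by (simp add: cross_def)
lemma cross_single_right: "cross E u [b] = length (filter (\<lambda>a. PP E a b) u)"
  unfolding cross_def by (induct u) auto

lemma od_append: "od (u @ v) = (od u - od v) \<union> (od v - od u)"
  by (auto simp: od_def)
lemma od_Cons: "od (a # w) = (if a \<in> od w then od w - {a} else insert a (od w))"
  by (auto simp: od_def)
lemma od_subset: "od w \<subseteq> set w"
proof
  fix a assume "a \<in> od w"
  then have "odd (count_list w a)" by (simp add: od_def)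
  then have "count_list w a \<noteq> 0" by (metis even_zero)
  then show "a \<in> set w" using count_list_0_iff by metis
qed
lemma finite_od: "finite (od w)"
  using od_subset finite_subset by blast
lemma od_ii: "od (u @ [i, i] @ v) = od (u @ v)"
  by (auto simp: od_def)
lemma od_swap: "od (u @ [i, j] @ v) = od (u @ [j, i] @ v)"
  by (auto simp: od_def)

lemma sg_ii: "sg E (u @ [i, i] @ v) = - sg E (u @ v)"
proof -
  have c: "cross E u ([i, i] @ v) = 2 * cross E u [i] + cross E u v"
    using cross_append_right[of E u "[i]" "[i] @ v"] cross_append_right[of E u "[i]" v] by simp
  have "nn E (u @ [i, i] @ v) = nn E (u @ v) + 1 + 2 * (length (filter (PP E i) v) + cross E u [i])"
    unfolding nn_append c by (simp add: PP_def cross_def)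
  thus ?thesis by (simp add: sg_def power_add)
qed

lemma sg_swap:
  assumes "i \<noteq> j" "\<And>a b. E a b \<Longrightarrow> E b a"
  shows "sg E (u @ [i, j] @ v) = (if E i j then -1 else 1) * sg E (u @ [j, i] @ v)"
proof -
  have c: "cross E u ([i, j] @ v) = cross E u ([j, i] @ v)"
    using cross_append_right[of E u "[i]" "[j] @ v"] cross_append_right[of E u "[j]" "[i] @ v"]
      cross_append_right[of E u "[j]" v] cross_append_right[of E u "[i]" v] by simp
  have c2: "cross E [i, j] v = cross E [j, i] v" by (simp add: cross_def)
  have e: "nn E (u @ [i, j] @ v) + (if PP E j i then 1 else 0) = nn E (u @ [j, i] @ v) + (if PP E i j then 1 else 0)"
    unfolding nn_append c c2 by simp
  show ?thesis
  proof (cases "E i j")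
    case True
    then have "E j i" using assms by blast
    show ?thesis
    proof (cases "j < i")
      case True
      with \<open>E i j\<close> assms have "nn E (u @ [i, j] @ v) = nn E (u @ [j, i] @ v) + 1"
        using e by (auto simp: PP_def)
      thus ?thesis using \<open>E i j\<close> by (simp add: sg_def)
    next
      case False
      with \<open>E j i\<close> assms have h: "nn E (u @ [j, i] @ v) = nn E (u @ [i, j] @ v) + 1"
        using e by (auto simp: PP_def)
      show ?thesis using \<open>E i j\<close> by (simp only: sg_def h) simp
    qed
  next
    case False
    then have "\<not> E j i" using assms by blast
    with False assms have "nn E (u @ [i, j] @ v) = nn E (u @ [j, i] @ v)"
      using e by (auto simp: PP_def)
    thus ?thesis using False by (simp add: sg_def)
  qed
qed


definition coef :: "(nat \<Rightarrow> nat \<Rightarrow> bool) \<Rightarrow> nat set \<Rightarrow> (nat list \<Rightarrow> complex) \<Rightarrow> complex" where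
  "coef E S p = (\<Sum>w\<in>supp p. if od w = S then p w * sg E w else 0)"

lemma coef_sup:
  assumes "finite A" "supp p \<subseteq> A"
  shows "coef E S p = (\<Sum>w\<in>A. if od w = S then p w * sg E w else 0)"
  unfolding coef_def using assms by (intro sum.mono_neutral_left) (auto simp: supp_def)

lemma coef_add:
  assumes "finite (supp p)" "finite (supp q)"
  shows "coef E S (p + q) = coef E S p + coef E S q"
proof -
  let ?A = "supp p \<union> supp q"
  have "coef E S (p + q) = (\<Sum>w\<in>?A. if od w = S then (p + q) w * sg E w else 0)"
    using assms supp_add by (intro coef_sup) auto
  also have "\<dots> = (\<Sum>w\<in>?A. if od w = S then p w * sg E w else 0) + (\<Sum>w\<in>?A. if od w = S then q w * sg E w else 0)"
    unfolding sum.distrib[symmetric] by (intro sum.cong refl) (simp add: distrib_right)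
  also have "\<dots> = coef E S p + coef E S q"
    using assms by (simp add: coef_sup[symmetric])
  finally show ?thesis .
qed

lemma coef_scale:
  assumes "finite (supp p)"
  shows "coef E S (fa_scale c p) = c * coef E S p"
proof -
  have "coef E S (fa_scale c p) = (\<Sum>w\<in>supp p. if od w = S then (fa_scale c p) w * sg E w else 0)"
    using assms supp_scale by (intro coef_sup) auto
  also have "\<dots> = c * coef E S p"
    unfolding coef_def by (simp add: sum_distrib_left) (intro sum.cong, auto)
  finally show ?thesis .
qed

lemma coef_zero: "coef E S 0 = 0"
  by (simp add: coef_def supp_zero)
lemma coef_zero': "coef E S (\<lambda>a. 0) = 0"
  by (simp add: coef_def supp_def)

lemma coef_minus:
  assumes "finite (supp p)"
  shows "coef E S (- p) = - coef E S p"
proof -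
  have "- p = fa_scale (-1) p" by (auto simp: fun_eq_iff)
  thus ?thesis using coef_scale[OF assms, of E S "-1"] by simp
qed

lemma fin_supp_minus: "finite (supp p) \<Longrightarrow> finite (supp (- p))"
  by (simp add: supp_def)

lemma coef_diff:
  assumes "finite (supp p)" "finite (supp q)"
  shows "coef E S (p - q) = coef E S p - coef E S q"
  using coef_add[OF assms(1) fin_supp_minus[OF assms(2)]] coef_minus[OF assms(2)]
  by simp

lemma coef_sum:
  assumes "\<And>a. a \<in> A \<Longrightarrow> finite (supp (f a))"
  shows "coef E S (sum f A) = (\<Sum>a\<in>A. coef E S (f a))"
  using assms
proof (induct A rule: infinite_finite_induct)
  case (infinite A) thus ?case by (simp add: coef_zero')
next
  case empty thus ?case by (simp add: coef_zero')
next
  case (insert x F)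
  have "coef E S (sum f (insert x F)) = coef E S (f x + sum f F)"
    using sum.insert[OF insert(1,2), of f] by (rule arg_cong)
  also have "\<dots> = coef E S (f x) + coef E S (sum f F)"
    using insert by (intro coef_add fin_supp_sum) auto
  also have "\<dots> = coef E S (f x) + (\<Sum>a\<in>F. coef E S (f a))"
    using insert by simp
  also have "\<dots> = (\<Sum>a\<in>insert x F. coef E S (f a))"
    using sum.insert[OF insert(1,2), of "\<lambda>a. coef E S (f a)"] by simp
  finally show ?case .
qed

lemma coef_dl: "coef E S (dl w) = (if od w = S then sg E w else 0)"
  unfolding coef_def supp_dl by (simp add: dl_def)

lemma dl_free: "set u \<subseteq> {..<n} \<Longrightarrow> dl u \<in> free_alg n"
  by (auto simp: free_alg_def dl_def)

lemma gen_in_ideal: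
  assumes "a \<in> free_alg n" "b \<in> free_alg n" "r \<in> cga_rels n E"
  shows "fa_mult (fa_mult a r) b \<in> cga_ideal n E"
  unfolding cga_ideal_def using assms by (intro fa.span_base) blast

lemma dl_mult3: "fa_mult (fa_mult (dl u) (dl x)) (dl v) = dl (u @ x @ v)"
  by (simp add: fa_mult_dl)

lemma rel_ii:
  assumes "i < n" "set u \<subseteq> {..<n}" "set v \<subseteq> {..<n}"
  shows "dl (u @ [i, i] @ v) + dl (u @ v) \<in> cga_ideal n E"
proof -
  have r: "dl [i, i] + dl [] \<in> cga_rels n E"
    unfolding cga_rels_def using assms(1) by (auto simp: fa_gen_dl fa_one_dl fa_mult_dl)
  show ?thesis
    using gen_in_ideal[OF dl_free[OF assms(2)] dl_free[OF assms(3)] r]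
    by (simp add: fa_mult_add_left fa_mult_add_right fa_mult_dl)
qed

lemma rel_adj:
  assumes "i < n" "j < n" "i \<noteq> j" "E i j" "set u \<subseteq> {..<n}" "set v \<subseteq> {..<n}"
  shows "dl (u @ [i, j] @ v) + dl (u @ [j, i] @ v) \<in> cga_ideal n E"
proof -
  have r: "dl [i, j] + dl [j, i] \<in> cga_rels n E"
    unfolding cga_rels_def using assms(1-4) by (auto simp: fa_gen_dl fa_mult_dl)
  show ?thesis
    using gen_in_ideal[OF dl_free[OF assms(5)] dl_free[OF assms(6)] r]
    by (simp add: fa_mult_add_left fa_mult_add_right fa_mult_dl)
qed

lemma rel_nadj:
  assumes "i < n" "j < n" "\<not> E i j" "set u \<subseteq> {..<n}" "set v \<subseteq> {..<n}"
  shows "dl (u @ [i, j] @ v) - dl (u @ [j, i] @ v) \<in> cga_ideal n E"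
proof (cases "i = j")
  case True thus ?thesis by (simp add: cga_ideal_def fa.span_zero)
next
  case False
  have r: "dl [i, j] - dl [j, i] \<in> cga_rels n E"
    unfolding cga_rels_def using assms(1-3) False by (auto simp: fa_gen_dl fa_mult_dl)
  show ?thesis
    using gen_in_ideal[OF dl_free[OF assms(4)] dl_free[OF assms(5)] r]
    by (simp add: fa_mult_diff_left fa_mult_diff_right fa_mult_dl)
qed


definition symG :: "(nat \<Rightarrow> nat \<Rightarrow> bool) \<Rightarrow> bool" where
  "symG E \<longleftrightarrow> (\<forall>a b. E a b \<longrightarrow> E b a) \<and> (\<forall>a. \<not> E a a)"

lemma rels_cases:
  assumes "r \<in> cga_rels n E"
  obtains i where "i < n" "r = dl [i, i] + dl []"
  | i j where "i < n" "j < n" "i \<noteq> j" "E i j" "r = dl [i, j] + dl [j, i]"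
  | i j where "i < n" "j < n" "i \<noteq> j" "\<not> E i j" "r = dl [i, j] - dl [j, i]"
  using assms unfolding cga_rels_def by (auto simp: fa_gen_dl fa_one_dl fa_mult_dl)

lemma rels_supp: "r \<in> cga_rels n E \<Longrightarrow> finite (supp r)"
  by (erule rels_cases) (auto intro!: fin_supp_add fin_supp_diff simp: supp_dl)

lemma gen_coef_words:
  assumes "symG E" "r \<in> cga_rels n E"
  shows "coef E S (fa_mult (fa_mult (dl u) r) (dl v)) = 0"
  using assms(2)
proof (cases rule: rels_cases)
  case (1 i)
  have "fa_mult (fa_mult (dl u) r) (dl v) = dl (u @ [i, i] @ v) + dl (u @ v)"
    using 1 by (simp add: fa_mult_add_left fa_mult_add_right fa_mult_dl)
  thus ?thesis using od_ii[of u i v] sg_ii[of E u i v] by (simp add: coef_add supp_dl coef_dl)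
next
  case (2 i j)
  have "fa_mult (fa_mult (dl u) r) (dl v) = dl (u @ [i, j] @ v) + dl (u @ [j, i] @ v)"
    using 2 by (simp add: fa_mult_add_left fa_mult_add_right fa_mult_dl)
  moreover have "sg E (u @ [i, j] @ v) = - sg E (u @ [j, i] @ v)"
    using sg_swap[of i j E u v] 2 assms(1) unfolding symG_def by auto
  ultimately show ?thesis using od_swap[of u i j v] by (simp add: coef_add supp_dl coef_dl)
next
  case (3 i j)
  have "fa_mult (fa_mult (dl u) r) (dl v) = dl (u @ [i, j] @ v) - dl (u @ [j, i] @ v)"
    using 3 by (simp add: fa_mult_diff_left fa_mult_diff_right fa_mult_dl)
  moreover have "sg E (u @ [i, j] @ v) = sg E (u @ [j, i] @ v)"
    using sg_swap[of i j E u v] 3 assms(1) unfolding symG_def by auto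
  ultimately show ?thesis using od_swap[of u i j v] by (simp add: coef_diff supp_dl coef_dl)
qed

lemma mult3_expand:
  assumes "finite (supp a)" "finite (supp b)"
  shows "fa_mult (fa_mult a r) b = (\<Sum>u\<in>supp a. \<Sum>v\<in>supp b. fa_scale (a u * b v) (fa_mult (fa_mult (dl u) r) (dl v)))"
proof -
  have "fa_mult (fa_mult a r) b = fa_mult (fa_mult (\<Sum>u\<in>supp a. fa_scale (a u) (dl u)) r) (\<Sum>v\<in>supp b. fa_scale (b v) (dl v))"
    by (intro arg_cong2[where f=fa_mult] arg_cong2[where f=fa_mult] expand assms refl)
  also have "\<dots> = (\<Sum>u\<in>supp a. \<Sum>v\<in>supp b. fa_scale (a u * b v) (fa_mult (fa_mult (dl u) r) (dl v)))"
    by (simp add: fa_mult_sum_left fa_mult_sum_right fa_mult_scale_left fa_mult_scale_right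
        fa.scale_sum_right mult.commute) (rule sum.swap)
  finally show ?thesis .
qed

lemma gen_coef:
  assumes "symG E" "r \<in> cga_rels n E" "a \<in> free_alg n" "b \<in> free_alg n"
  shows "finite (supp (fa_mult (fa_mult a r) b)) \<and> coef E S (fa_mult (fa_mult a r) b) = 0"
proof -
  have fa: "finite (supp a)" and fb: "finite (supp b)" and fr: "finite (supp r)"
    using assms free_alg_supp rels_supp by auto
  have fw: "finite (supp (fa_mult (fa_mult (dl u) r) (dl v)))" for u v
    by (intro fin_supp_mult fr) (auto simp: supp_dl)
  show ?thesis
    unfolding mult3_expand[OF fa fb]
    using fw gen_coef_words[OF assms(1,2)]
    by (simp add: coef_sum fin_supp_sum fin_supp_scale coef_scale)
qed

lemma ideal_coef:
  assumes "symG E" "x \<in> cga_ideal n E"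
  shows "finite (supp x) \<and> coef E S x = 0"
  using assms(2) unfolding cga_ideal_def
proof (induct rule: fa.span_induct_alt)
  case base thus ?case by (simp add: supp_def coef_zero')
next
  case (step c x y)
  then obtain a r b where x: "x = fa_mult (fa_mult a r) b" "a \<in> free_alg n" "r \<in> cga_rels n E" "b \<in> free_alg n"
    by blast
  have g: "finite (supp x) \<and> coef E S x = 0" using gen_coef[OF assms(1) x(3,2,4)] x(1) by simp
  have f1: "finite (supp (fa_scale c x))" using g by (intro fin_supp_scale) simp
  have "coef E S (fa_scale c x + y) = coef E S (fa_scale c x) + coef E S y"
    using f1 step(2) by (intro coef_add) auto
  also have "\<dots> = 0" using g step(2) coef_scale[of x E S c] by simp
  finally show ?case using f1 step(2) fin_supp_add by blast
qed


abbreviation nw :: "nat set \<Rightarrow> nat list" where "nw \<equiv> sorted_list_of_set"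
definition symd :: "nat set \<Rightarrow> nat set \<Rightarrow> nat set" where "symd A B = (A - B) \<union> (B - A)"

lemma nw_sorted: "sorted_wrt (<) xs \<Longrightarrow> nw (set xs) = xs"
  by (simp add: sorted_list_of_set_sort_remdups strict_sorted_iff distinct_remdups_id sorted_sort_id)

lemma nw_strict: "sorted_wrt (<) (nw A)"
  by (simp add: strict_sorted_list_of_set)

lemma I_add: "x \<in> cga_ideal n E \<Longrightarrow> y \<in> cga_ideal n E \<Longrightarrow> x + y \<in> cga_ideal n E"
  unfolding cga_ideal_def by (rule fa.span_add)
lemma I_diff: "x \<in> cga_ideal n E \<Longrightarrow> y \<in> cga_ideal n E \<Longrightarrow> x - y \<in> cga_ideal n E"
  unfolding cga_ideal_def by (rule fa.span_diff)
lemma I_scale: "x \<in> cga_ideal n E \<Longrightarrow> fa_scale c x \<in> cga_ideal n E"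
  unfolding cga_ideal_def by (rule fa.span_scale)
lemma I_zero: "0 \<in> cga_ideal n E"
  unfolding cga_ideal_def by (rule fa.span_zero)
lemma I_sum: "(\<And>a. a \<in> A \<Longrightarrow> f a \<in> cga_ideal n E) \<Longrightarrow> sum f A \<in> cga_ideal n E"
  unfolding cga_ideal_def by (rule fa.span_sum)

lemma I_refl: "x - fa_scale 1 x \<in> cga_ideal n E"
  using I_zero by simp

lemma eqv_trans:
  assumes "x - fa_scale c y \<in> cga_ideal n E" "y - fa_scale d z \<in> cga_ideal n E"
  shows "x - fa_scale (c * d) z \<in> cga_ideal n E"
proof -
  have "x - fa_scale (c * d) z = (x - fa_scale c y) + fa_scale c (y - fa_scale d z)"
    by (auto simp: fun_eq_iff algebra_simps)
  thus ?thesis using assms by (metis I_add I_scale)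
qed

lemma R_sorted:
  assumes "symG E"
  shows "sorted_wrt (<) L \<Longrightarrow> set L \<subseteq> {..<n} \<Longrightarrow> i < n \<Longrightarrow> set u \<subseteq> {..<n} \<Longrightarrow> set v \<subseteq> {..<n}
    \<Longrightarrow> \<exists>c. dl (u @ L @ [i] @ v) - fa_scale c (dl (u @ nw (symd (set L) {i}) @ v)) \<in> cga_ideal n E"
proof (induct L arbitrary: v rule: rev_induct)
  case Nil
  have "symd (set []) {i} = set [i]" by (simp add: symd_def)
  then have h: "nw (symd (set []) {i}) = [i]" using nw_sorted[of "[i]"] by simp
  have "dl (u @ [] @ [i] @ v) - fa_scale 1 (dl (u @ nw (symd (set []) {i}) @ v))
     = dl (u @ [i] @ v) - fa_scale 1 (dl (u @ [i] @ v))" using h by simp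
  thus ?case using I_refl by metis
next
  case (snoc j L0)
  have sL0: "sorted_wrt (<) L0" and lt: "\<forall>a\<in>set L0. a < j"
    using snoc(2) by (auto simp: sorted_wrt_append)
  have jn: "j < n" and L0n: "set L0 \<subseteq> {..<n}" using snoc(3) by auto
  consider "j < i" | "j = i" | "i < j" by linarith
  then show ?case
  proof cases
    case 1
    have "sorted_wrt (<) (L0 @ [j, i])" using sL0 lt 1 by (auto simp: sorted_wrt_append)
    moreover have "symd (set (L0 @ [j])) {i} = set (L0 @ [j, i])"
      using lt 1 by (auto simp: symd_def)
    ultimately have h: "nw (symd (set (L0 @ [j])) {i}) = L0 @ [j, i]" using nw_sorted by metis
    have "dl (u @ (L0 @ [j]) @ [i] @ v) - fa_scale 1 (dl (u @ nw (symd (set (L0 @ [j])) {i}) @ v))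
     = dl (u @ L0 @ [j, i] @ v) - fa_scale 1 (dl (u @ L0 @ [j, i] @ v))" using h by simp
    thus ?thesis using I_refl by metis
  next
    case 2
    have "i \<notin> set L0" using lt 2 by auto
    then have "symd (set (L0 @ [j])) {i} = set L0" using 2 by (auto simp: symd_def)
    then have nwe: "nw (symd (set (L0 @ [j])) {i}) = L0" using nw_sorted[OF sL0] by simp
    have "dl ((u @ L0) @ [i, i] @ v) + dl ((u @ L0) @ v) \<in> cga_ideal n E"
      using rel_ii[of i n "u @ L0" v E] snoc 2 L0n by auto
    moreover have "dl ((u @ L0) @ [i, i] @ v) + dl ((u @ L0) @ v) =
        dl (u @ (L0 @ [j]) @ [i] @ v) - fa_scale (-1) (dl (u @ nw (symd (set (L0 @ [j])) {i}) @ v))"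
      unfolding nwe using 2 by (auto simp: fun_eq_iff)
    ultimately show ?thesis by metis
  next
    case 3
    have h1: "\<exists>c1. dl (u @ (L0 @ [j]) @ [i] @ v) - fa_scale c1 (dl (u @ L0 @ [i] @ j # v)) \<in> cga_ideal n E"
    proof (cases "E j i")
      case True
      have "dl ((u @ L0) @ [j, i] @ v) + dl ((u @ L0) @ [i, j] @ v) \<in> cga_ideal n E"
        using rel_adj[of j n i E "u @ L0" v] True 3 jn snoc(4-6) L0n by auto
      moreover have "dl (u @ (L0 @ [j]) @ [i] @ v) - fa_scale (-1) (dl (u @ L0 @ [i] @ j # v))
          = dl ((u @ L0) @ [j, i] @ v) + dl ((u @ L0) @ [i, j] @ v)"
        by (simp add: fun_eq_iff)
      ultimately show ?thesis by metis
    next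
      case False
      have "dl ((u @ L0) @ [j, i] @ v) - dl ((u @ L0) @ [i, j] @ v) \<in> cga_ideal n E"
        using rel_nadj[of j n i E "u @ L0" v] False 3 jn snoc(4-6) L0n by auto
      moreover have "dl (u @ (L0 @ [j]) @ [i] @ v) - fa_scale 1 (dl (u @ L0 @ [i] @ j # v))
          = dl ((u @ L0) @ [j, i] @ v) - dl ((u @ L0) @ [i, j] @ v)"
        by (simp add: fun_eq_iff)
      ultimately show ?thesis by metis
    qed
    then obtain c1 where h1: "dl (u @ (L0 @ [j]) @ [i] @ v) - fa_scale c1 (dl (u @ L0 @ [i] @ j # v)) \<in> cga_ideal n E"
      by blast
    let ?A = "symd (set L0) {i}"
    have sv: "set (j # v) \<subseteq> {..<n}" using snoc(6) jn by auto
    from snoc(1)[OF sL0 L0n snoc(4) snoc(5) sv]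
    obtain c2 where h2: "dl (u @ L0 @ [i] @ j # v) - fa_scale c2 (dl (u @ nw ?A @ j # v)) \<in> cga_ideal n E"
      by blast
    have finA: "finite ?A" unfolding symd_def by auto
    have Alt: "\<forall>a\<in>?A. a < j" using lt 3 unfolding symd_def by auto
    have "j \<notin> set L0" using lt by auto
    then have s2: "symd (set (L0 @ [j])) {i} = insert j ?A" using 3 unfolding symd_def by auto
    have ss: "sorted_wrt (<) (nw ?A @ [j])" using nw_strict[of ?A] Alt finA by (auto simp: sorted_wrt_append)
    have st: "set (nw ?A @ [j]) = insert j ?A" using finA by auto
    have "nw (symd (set (L0 @ [j])) {i}) = nw (insert j ?A)" by (simp only: s2)
    also have "\<dots> = nw (set (nw ?A @ [j]))" by (simp only: st)
    also have "\<dots> = nw ?A @ [j]" by (rule nw_sorted[OF ss])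
    finally have nwA: "nw (symd (set (L0 @ [j])) {i}) = nw ?A @ [j]" .
    have eq: "u @ nw (symd (set (L0 @ [j])) {i}) @ v = u @ nw ?A @ j # v" by (simp only: nwA append_assoc append_Cons append_Nil)
    show ?thesis by (rule exI[of _ "c1 * c2"], unfold eq, rule eqv_trans[OF h1 h2])
  qed
qed


lemma od_Nil: "od [] = {}" by (simp add: od_def)
lemma od_snoc: "od (w @ [i]) = symd (od w) {i}"
  by (auto simp: od_def symd_def)
lemma od_distinct: "distinct xs \<Longrightarrow> od xs = set xs"
  by (induct xs) (auto simp: od_Nil od_Cons)
lemma od_nw: "finite A \<Longrightarrow> od (nw A) = A"
  by (simp add: od_distinct)
lemma nn_sorted: "sorted_wrt (<) xs \<Longrightarrow> nn E xs = 0"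
proof (induct xs)
  case Nil thus ?case by simp
next
  case (Cons a xs)
  have "filter (PP E a) xs = []" using Cons(2) by (auto simp: filter_empty_conv PP_def)
  thus ?case using Cons by simp
qed
lemma sg_nw: "sg E (nw A) = 1"
  by (simp add: sg_def nn_sorted nw_strict)

lemma RW:
  assumes "symG E"
  shows "set w \<subseteq> {..<n} \<Longrightarrow> set v \<subseteq> {..<n}
    \<Longrightarrow> \<exists>c. dl (w @ v) - fa_scale c (dl (nw (od w) @ v)) \<in> cga_ideal n E"
proof (induct w arbitrary: v rule: rev_induct)
  case Nil
  have "dl ([] @ v) - fa_scale 1 (dl (nw (od []) @ v)) = dl v - fa_scale 1 (dl v)" by (simp add: od_Nil)
  thus ?case using I_refl by metis
next
  case (snoc i w)
  have sv: "set (i # v) \<subseteq> {..<n}" using snoc(2,3) by auto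
  have sw: "set w \<subseteq> {..<n}" and iN: "i < n" using snoc(2) by auto
  from snoc(1)[OF sw sv]
  obtain c where h1: "dl (w @ i # v) - fa_scale c (dl (nw (od w) @ i # v)) \<in> cga_ideal n E"
    by blast
  have fo: "finite (od w)" by (rule finite_od)
  have L: "sorted_wrt (<) (nw (od w))" "set (nw (od w)) \<subseteq> {..<n}"
    using nw_strict fo od_subset[of w] snoc(2) by auto
  have sn: "set ([]::nat list) \<subseteq> {..<n}" by simp
  from R_sorted[OF assms L iN sn snoc(3)]
  obtain c' where h2: "dl ([] @ nw (od w) @ [i] @ v) - fa_scale c' (dl ([] @ nw (symd (set (nw (od w))) {i}) @ v)) \<in> cga_ideal n E"
    by blast
  have e1: "[] @ nw (od w) @ [i] @ v = nw (od w) @ i # v" by simp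
  have e2: "[] @ nw (symd (set (nw (od w))) {i}) @ v = nw (od (w @ [i])) @ v"
    using fo by (simp add: od_snoc)
  have e3: "(w @ [i]) @ v = w @ i # v" by simp
  show ?case
    by (rule exI[of _ "c * c'"], unfold e3, rule eqv_trans[OF h1], unfold e1[symmetric] e2[symmetric], rule h2)
qed

lemma RWc:
  assumes "symG E" "set w \<subseteq> {..<n}"
  shows "dl w - fa_scale (sg E w) (dl (nw (od w))) \<in> cga_ideal n E"
proof -
  obtain c where h: "dl w - fa_scale c (dl (nw (od w))) \<in> cga_ideal n E"
    using RW[OF assms(1,2), of "[]"] by auto
  have "coef E (od w) (dl w - fa_scale c (dl (nw (od w)))) = 0"
    using ideal_coef[OF assms(1) h] by blast
  moreover have "coef E (od w) (dl w - fa_scale c (dl (nw (od w)))) = sg E w - c"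
    by (simp add: coef_diff fin_supp_scale supp_dl coef_scale coef_dl od_nw finite_od sg_nw)
  ultimately have "c = sg E w" by simp
  thus ?thesis using h by simp
qed


lemma free_alg_words: "p \<in> free_alg n \<Longrightarrow> w \<in> supp p \<Longrightarrow> set w \<subseteq> {..<n}"
  by (auto simp: free_alg_def supp_def)

lemma psi:
  assumes "symG E" "p \<in> free_alg n"
  shows "p - (\<Sum>T\<in>Pow {..<n}. fa_scale (coef E T p) (dl (nw T))) \<in> cga_ideal n E"
proof -
  have fp: "finite (supp p)" using assms(2) free_alg_supp by auto
  let ?Q = "\<Sum>w\<in>supp p. fa_scale (p w * sg E w) (dl (nw (od w)))"
  have "p - ?Q = (\<Sum>w\<in>supp p. fa_scale (p w) (dl w)) - ?Q"
    using expand[OF fp] by simp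
  also have "\<dots> = (\<Sum>w\<in>supp p. fa_scale (p w) (dl w - fa_scale (sg E w) (dl (nw (od w)))))"
    by (simp add: sum_subtractf[symmetric] fa.scale_right_diff_distrib)
  finally have e1: "p - ?Q = (\<Sum>w\<in>supp p. fa_scale (p w) (dl w - fa_scale (sg E w) (dl (nw (od w)))))" .
  have "p - ?Q \<in> cga_ideal n E"
    unfolding e1 by (intro I_sum I_scale RWc[OF assms(1)] free_alg_words[OF assms(2)])
  moreover have "?Q = (\<Sum>T\<in>Pow {..<n}. fa_scale (coef E T p) (dl (nw T)))"
  proof -
    have "(\<Sum>T\<in>Pow {..<n}. fa_scale (coef E T p) (dl (nw T)))
        = (\<Sum>T\<in>Pow {..<n}. \<Sum>w\<in>supp p. fa_scale (if od w = T then p w * sg E w else 0) (dl (nw T)))"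
      unfolding coef_def by (simp add: fa.scale_sum_left)
    also have "\<dots> = (\<Sum>w\<in>supp p. \<Sum>T\<in>Pow {..<n}. fa_scale (if od w = T then p w * sg E w else 0) (dl (nw T)))"
      by (rule sum.swap)
    also have "\<dots> = (\<Sum>w\<in>supp p. \<Sum>T\<in>Pow {..<n}. (if od w = T then fa_scale (p w * sg E w) (dl (nw (od w))) else 0))"
      by (intro sum.cong refl) auto
    also have "\<dots> = ?Q"
    proof (intro sum.cong refl)
      fix w assume "w \<in> supp p"
      then have "od w \<in> Pow {..<n}" using od_subset[of w] free_alg_words[OF assms(2)] by blast
      then show "(\<Sum>T\<in>Pow {..<n}. (if od w = T then fa_scale (p w * sg E w) (dl (nw (od w))) else 0))
          = fa_scale (p w * sg E w) (dl (nw (od w)))"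
        by (subst sum.delta') auto
    qed
    finally show ?thesis by simp
  qed
  ultimately show ?thesis by simp
qed

definition par :: "(nat \<Rightarrow> bool) \<Rightarrow> nat set \<Rightarrow> complex" where
  "par Q X = (\<Prod>a\<in>X. if Q a then -1 else 1)"

lemma par_sq: "par Q X * par Q X = 1"
  unfolding par_def prod.distrib[symmetric] by (intro prod.neutral) auto

lemma par_mult: "par Q X * par R X = par (\<lambda>a. Q a \<noteq> R a) X"
  unfolding par_def prod.distrib[symmetric] by (intro prod.cong) auto

lemma par_card: "finite X \<Longrightarrow> par Q X = (-1) ^ card {a\<in>X. Q a}"
proof (induct X rule: finite_induct)
  case empty thus ?case by (simp add: par_def)
next
  case (insert x F)
  have fF: "finite {a\<in>F. Q a}" using insert(1) by auto
  have "x \<notin> {a\<in>F. Q a}" using insert(2) by auto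
  have pi: "par Q (insert x F) = (if Q x then -1 else 1) * par Q F"
    unfolding par_def using prod.insert[OF insert(1,2), of "\<lambda>a. if Q a then -1 else (1::complex)"] by simp
  show ?case
  proof (cases "Q x")
    case True
    then have "{a\<in>insert x F. Q a} = insert x {a\<in>F. Q a}" by auto
    then have "card {a\<in>insert x F. Q a} = Suc (card {a\<in>F. Q a})" using fF \<open>x \<notin> {a\<in>F. Q a}\<close> by simp
    thus ?thesis using pi True insert(3) by simp
  next
    case False
    then have "{a\<in>insert x F. Q a} = {a\<in>F. Q a}" by auto
    thus ?thesis using pi False insert(3) by simp
  qed
qed

lemma par_filter: "(-1::complex) ^ length (filter Q w) = par Q (od w)"
proof (induct w)
  case Nil thus ?case by (simp add: od_Nil par_def)
next
  case (Cons a w)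
  have fo: "finite (od w)" by (rule finite_od)
  show ?case
  proof (cases "a \<in> od w")
    case True
    have "par Q (od w) = (if Q a then -1 else 1) * par Q (od w - {a})"
      unfolding par_def using prod.remove[OF fo True, of "\<lambda>a. if Q a then -1 else (1::complex)"] by simp
    then have "par Q (od w - {a}) = (if Q a then -1 else 1) * par Q (od w)"
      by auto
    thus ?thesis using Cons True by (simp add: od_Cons)
  next
    case False
    have "par Q (insert a (od w)) = (if Q a then -1 else 1) * par Q (od w)"
      unfolding par_def using prod.insert[OF fo False, of "\<lambda>a. if Q a then -1 else (1::complex)"] by simp
    thus ?thesis using Cons False by (simp add: od_Cons)
  qed
qed

lemma sg_snoc: "sg E (w @ [i]) = sg E w * par (\<lambda>a. PP E a i) (od w)"
  by (simp add: sg_def nn_append cross_single_right power_add par_filter[symmetric])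

lemma sg_Cons: "sg E (i # w) = par (PP E i) (od w) * sg E w"
  by (simp add: sg_def power_add par_filter[symmetric])

lemma PP_xor:
  assumes "symG E"
  shows "(PP E a i \<noteq> PP E i a) = E i a"
  using assms unfolding symG_def PP_def by (cases "a < i"; cases "i < a") auto

lemma mult_dl_right:
  assumes "finite (supp p)"
  shows "fa_mult p (dl v) = (\<Sum>u\<in>supp p. fa_scale (p u) (dl (u @ v)))"
proof -
  have "fa_mult p (dl v) = fa_mult (\<Sum>u\<in>supp p. fa_scale (p u) (dl u)) (dl v)"
    by (intro arg_cong2[where f=fa_mult] expand assms refl)
  thus ?thesis by (simp add: fa_mult_sum_left fa_mult_scale_left fa_mult_dl)
qed

lemma mult_dl_left:
  assumes "finite (supp p)"
  shows "fa_mult (dl v) p = (\<Sum>u\<in>supp p. fa_scale (p u) (dl (v @ u)))"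
proof -
  have "fa_mult (dl v) p = fa_mult (dl v) (\<Sum>u\<in>supp p. fa_scale (p u) (dl u))"
    by (intro arg_cong2[where f=fa_mult] expand assms refl)
  thus ?thesis by (simp add: fa_mult_sum_right fa_mult_scale_right fa_mult_dl)
qed

lemma symd_cancel: "symd A {i} = symd B {i} \<longleftrightarrow> A = B"
  unfolding symd_def by blast

lemma coef_mult_i:
  assumes "finite (supp x)" "Q1 = (\<lambda>a. PP E a i)"
  shows "coef E (symd T {i}) (fa_mult x (dl [i])) = par Q1 T * coef E T x"
proof -
  have "coef E (symd T {i}) (fa_mult x (dl [i])) = (\<Sum>u\<in>supp x. x u * coef E (symd T {i}) (dl (u @ [i])))"
    unfolding mult_dl_right[OF assms(1)]
    by (simp add: coef_sum coef_scale fin_supp_scale supp_dl)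
  also have "\<dots> = (\<Sum>u\<in>supp x. par Q1 T * (if od u = T then x u * sg E u else 0))"
    by (intro sum.cong refl) (auto simp: coef_dl od_snoc symd_cancel sg_snoc assms(2))
  also have "\<dots> = par Q1 T * coef E T x"
    by (simp add: coef_def sum_distrib_left)
  finally show ?thesis .
qed

lemma coef_i_mult:
  assumes "finite (supp x)"
  shows "coef E (symd T {i}) (fa_mult (dl [i]) x) = par (PP E i) T * coef E T x"
proof -
  have "coef E (symd T {i}) (fa_mult (dl [i]) x) = (\<Sum>u\<in>supp x. x u * coef E (symd T {i}) (dl ([i] @ u)))"
    unfolding mult_dl_left[OF assms(1)]
    by (simp add: coef_sum coef_scale fin_supp_scale supp_dl)
  also have "\<dots> = (\<Sum>u\<in>supp x. par (PP E i) T * (if od u = T then x u * sg E u else 0))"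
  proof (intro sum.cong refl)
    fix u
    have "od (i # u) = symd (od u) {i}" by (auto simp: od_Cons symd_def)
    then show "x u * coef E (symd T {i}) (dl ([i] @ u)) = par (PP E i) T * (if od u = T then x u * sg E u else 0)"
      by (auto simp: coef_dl symd_cancel sg_Cons)
  qed
  also have "\<dots> = par (PP E i) T * coef E T x"
    by (simp add: coef_def sum_distrib_left)
  finally show ?thesis .
qed

lemma center_coef:
  assumes "symG E" "x \<in> free_alg n" "\<forall>y\<in>free_alg n. fa_mult x y - fa_mult y x \<in> cga_ideal n E"
    "i < n" "odd (card {j\<in>T. E i j})" "finite T"
  shows "coef E T x = 0"
proof -
  have fx: "finite (supp x)" using assms(2) free_alg_supp by auto
  have "dl [i] \<in> free_alg n" using assms(4) by (intro dl_free) auto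
  then have D: "fa_mult x (dl [i]) - fa_mult (dl [i]) x \<in> cga_ideal n E" using assms(3) by blast
  have f1: "finite (supp (fa_mult x (dl [i])))" and f2: "finite (supp (fa_mult (dl [i]) x))"
    using fx by (auto intro!: fin_supp_mult simp: supp_dl)
  have "coef E (symd T {i}) (fa_mult x (dl [i]) - fa_mult (dl [i]) x) = 0"
    using ideal_coef[OF assms(1) D] by blast
  then have eq: "par (\<lambda>a. PP E a i) T * coef E T x = par (PP E i) T * coef E T x"
    using coef_diff[OF f1 f2] coef_mult_i[OF fx refl] coef_i_mult[OF fx] by simp
  have "par (\<lambda>a. PP E a i) T * par (PP E i) T = par (E i) T"
    unfolding par_mult using PP_xor[OF assms(1)] by simp
  also have "\<dots> = -1" using par_card[OF assms(6)] assms(5) by simp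
  finally have m: "par (\<lambda>a. PP E a i) T * par (PP E i) T = -1" .
  have "par (PP E i) T * (par (\<lambda>a. PP E a i) T * coef E T x) = par (PP E i) T * (par (PP E i) T * coef E T x)"
    using eq by simp
  then have "- coef E T x = coef E T x"
    using m par_sq[of "PP E i" T] by (simp add: algebra_simps)
  thus ?thesis by simp
qed


definition Kset :: "nat \<Rightarrow> (nat \<Rightarrow> nat \<Rightarrow> bool) \<Rightarrow> nat set set" where
  "Kset n E = {S. S \<subseteq> {..<n} \<and> (\<forall>i<n. even (card {j\<in>S. E i j}))}"

lemma Kset_fin: "finite (Kset n E)"
  by (rule finite_subset[of _ "Pow {..<n}"]) (auto simp: Kset_def)

lemma crossK:
  assumes "symG E" "S \<in> Kset n E"
  shows "set u \<subseteq> {..<n} \<Longrightarrow> (-1::complex) ^ cross E (nw S) u = (-1) ^ cross E u (nw S)"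
proof (induct u)
  case Nil thus ?case by (simp add: cross_def)
next
  case (Cons b u)
  have fS: "finite S" using assms(2) unfolding Kset_def by (auto intro: finite_subset)
  have bn: "b < n" using Cons(2) by auto
  have c1: "cross E (nw S) (b # u) = length (filter (\<lambda>a. PP E a b) (nw S)) + cross E (nw S) u"
    using cross_append_right[of E "nw S" "[b]" u] cross_single_right[of E "nw S" b] by simp
  have c2: "cross E (b # u) (nw S) = length (filter (PP E b) (nw S)) + cross E u (nw S)"
    by (rule cross_Cons_left)
  have x: "(-1::complex) ^ length (filter (\<lambda>a. PP E a b) (nw S)) = par (\<lambda>a. PP E a b) S"
    using par_filter od_nw[OF fS] by metis
  have y: "(-1::complex) ^ length (filter (PP E b) (nw S)) = par (PP E b) S"
    using par_filter od_nw[OF fS] by metis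
  have "par (\<lambda>a. PP E a b) S * par (PP E b) S = par (E b) S"
    unfolding par_mult using PP_xor[OF assms(1)] by simp
  also have "\<dots> = 1" using par_card[OF fS] assms(2) bn unfolding Kset_def by simp
  finally have xy: "par (\<lambda>a. PP E a b) S * par (PP E b) S = 1" .
  have "par (\<lambda>a. PP E a b) S = par (\<lambda>a. PP E a b) S * (par (PP E b) S * par (PP E b) S)"
    using par_sq by simp
  also have "\<dots> = par (PP E b) S" using xy by (metis mult.assoc mult_1)
  finally have eq: "par (\<lambda>a. PP E a b) S = par (PP E b) S" .
  show ?case unfolding c1 c2 power_add x y eq using Cons by simp
qed

lemma comm_K:
  assumes "symG E" "S \<in> Kset n E" "set u \<subseteq> {..<n}"
  shows "dl (nw S @ u) - dl (u @ nw S) \<in> cga_ideal n E"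
proof -
  have fS: "finite S" and Sn: "S \<subseteq> {..<n}" using assms(2) unfolding Kset_def by (auto intro: finite_subset)
  have sL: "set (nw S) \<subseteq> {..<n}" using fS Sn by simp
  have h1: "dl (nw S @ u) - fa_scale (sg E (nw S @ u)) (dl (nw (od (nw S @ u)))) \<in> cga_ideal n E"
    using RWc[OF assms(1)] sL assms(3) by simp
  have h2: "dl (u @ nw S) - fa_scale (sg E (u @ nw S)) (dl (nw (od (u @ nw S)))) \<in> cga_ideal n E"
    using RWc[OF assms(1)] sL assms(3) by simp
  have o: "od (nw S @ u) = od (u @ nw S)" by (auto simp: od_append)
  have s: "sg E (nw S @ u) = sg E (u @ nw S)"
    unfolding sg_def nn_append power_add using crossK[OF assms(1,2,3)] by simp
  have "dl (nw S @ u) - dl (u @ nw S) =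
     (dl (nw S @ u) - fa_scale (sg E (nw S @ u)) (dl (nw (od (nw S @ u)))))
     - (dl (u @ nw S) - fa_scale (sg E (u @ nw S)) (dl (nw (od (u @ nw S)))))"
    unfolding o s by simp
  thus ?thesis using I_diff[OF h1 h2] by simp
qed

lemma B0_center:
  assumes "symG E" "S \<in> Kset n E"
  shows "dl (nw S) \<in> cga_center_lift n E"
proof -
  have fS: "finite S" and Sn: "S \<subseteq> {..<n}" using assms(2) unfolding Kset_def by (auto intro: finite_subset)
  have xf: "dl (nw S) \<in> free_alg n" using fS Sn by (intro dl_free) simp
  have "fa_mult (dl (nw S)) y - fa_mult y (dl (nw S)) \<in> cga_ideal n E" if y: "y \<in> free_alg n" for y
  proof -
    have fy: "finite (supp y)" using y free_alg_supp by auto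
    have "fa_mult (dl (nw S)) y - fa_mult y (dl (nw S)) = (\<Sum>u\<in>supp y. fa_scale (y u) (dl (nw S @ u) - dl (u @ nw S)))"
      unfolding mult_dl_left[OF fy] mult_dl_right[OF fy]
      by (simp add: sum_subtractf[symmetric] fa.scale_right_diff_distrib)
    also have "\<dots> \<in> cga_ideal n E"
      by (intro I_sum I_scale comm_K[OF assms] free_alg_words[OF y])
    finally show ?thesis .
  qed
  thus ?thesis unfolding cga_center_lift_def using xf by blast
qed

lemma coef_nw: "finite S \<Longrightarrow> coef E T (dl (nw S)) = (if S = T then 1 else 0)"
  by (simp add: coef_dl od_nw sg_nw)

lemma inj_nw: "inj_on (\<lambda>S. dl (nw S)) (Kset n E)"
proof (rule inj_onI)
  fix S T assume "S \<in> Kset n E" "T \<in> Kset n E" "dl (nw S) = dl (nw T)"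
  then have "nw S = nw T" "finite S" "finite T" using dl_inj unfolding Kset_def by (auto intro: finite_subset)
  then show "S = T" by (metis set_sorted_list_of_set)
qed

lemma coef_B0:
  assumes "T \<in> Kset n E"
  shows "coef E T (\<Sum>v\<in>(\<lambda>S. dl (nw S)) ` Kset n E. fa_scale (c v) v) = c (dl (nw T))"
proof -
  have fK: "\<And>S. S \<in> Kset n E \<Longrightarrow> finite S" unfolding Kset_def by (auto intro: finite_subset)
  have "coef E T (\<Sum>v\<in>(\<lambda>S. dl (nw S)) ` Kset n E. fa_scale (c v) v)
      = (\<Sum>v\<in>(\<lambda>S. dl (nw S)) ` Kset n E. coef E T (fa_scale (c v) v))"
    by (rule coef_sum) (auto intro!: fin_supp_scale simp: supp_dl)
  also have "\<dots> = (\<Sum>v\<in>(\<lambda>S. dl (nw S)) ` Kset n E. c v * coef E T v)"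
    by (intro sum.cong refl) (auto simp: coef_scale supp_dl)
  also have "\<dots> = (\<Sum>S\<in>Kset n E. c (dl (nw S)) * coef E T (dl (nw S)))"
    by (subst sum.reindex[OF inj_nw]) simp
  also have "\<dots> = (\<Sum>S\<in>Kset n E. if S = T then c (dl (nw S)) else 0)"
    by (intro sum.cong refl) (simp add: coef_nw fK)
  also have "\<dots> = c (dl (nw T))" using assms Kset_fin by simp
  finally show ?thesis .
qed


context vector_space
begin

lemma ub_dim:
  assumes "finite B0" "subspace I" "finite B" "independent B" "span B \<inter> I = {0}"
    "\<And>b. b \<in> B \<Longrightarrow> f b \<in> span B0 \<and> b - f b \<in> I"
  shows "card B \<le> card B0"
proof -
  have inj: "inj_on f B"
  proof (rule inj_onI)
    fix a b assume a: "a \<in> B" and b: "b \<in> B" and e: "f a = f b"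
    have "a - b = (a - f a) - (b - f b)" using e by simp
    then have "a - b \<in> I" using assms(6)[OF a] assms(6)[OF b] subspace_diff[OF assms(2)] by metis
    moreover have "a - b \<in> span B" using a b span_base span_diff by metis
    ultimately have "a - b = 0" using assms(5) by blast
    thus "a = b" by simp
  qed
  have ind: "independent (f ` B)"
  proof
    assume "dependent (f ` B)"
    then obtain u where u: "\<exists>v\<in>f ` B. u v \<noteq> 0" "(\<Sum>v\<in>f ` B. u v *s v) = 0"
      using dependent_finite[of "f ` B"] assms(3) by auto
    have z0: "(\<Sum>b\<in>B. u (f b) *s f b) = 0" using u(2) sum.reindex[OF inj, of "\<lambda>v. u v *s v"] by simp
    let ?z = "\<Sum>b\<in>B. u (f b) *s b"
    have "?z = ?z - (\<Sum>b\<in>B. u (f b) *s f b)" using z0 by simp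
    also have "\<dots> = (\<Sum>b\<in>B. u (f b) *s (b - f b))"
      by (simp add: scale_right_diff_distrib sum_subtractf)
    finally have ze: "?z = (\<Sum>b\<in>B. u (f b) *s (b - f b))" .
    have "?z \<in> I" unfolding ze using assms(6) by (intro subspace_sum[OF assms(2)] subspace_scale[OF assms(2)]) auto
    moreover have "?z \<in> span B" by (intro span_sum span_scale span_base)
    ultimately have "?z = 0" using assms(5) by blast
    then have "\<forall>b\<in>B. u (f b) = 0" using assms(4) dependent_finite[OF assms(3)] by auto
    then show False using u(1) by auto
  qed
  have "f ` B \<subseteq> span B0" using assms(6) by auto
  from independent_span_bound[OF assms(1) ind this] have "card (f ` B) \<le> card B0" by simp
  thus ?thesis using card_image[OF inj] by simp
qed

end

lemma simple_symG: "simple_graph n E \<Longrightarrow> symG E"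
  unfolding simple_graph_def symG_def by blast

lemma center_dim:
  assumes "symG E"
  shows "cga_center_dim n E = card (Kset n E)"
proof -
  let ?C = "cga_center_lift n E" and ?I = "cga_ideal n E"
  let ?X = "{card B | B. B \<subseteq> ?C \<and> finite B \<and> \<not> fa.dependent B \<and> fa.span B \<inter> ?I = {0}}"
  let ?B0 = "(\<lambda>S. dl (nw S)) ` Kset n E"
  have fK: "\<And>S. S \<in> Kset n E \<Longrightarrow> finite S" unfolding Kset_def by (auto intro: finite_subset)
  have fB0: "finite ?B0" using Kset_fin by simp
  have cB0: "card ?B0 = card (Kset n E)" using card_image[OF inj_nw] .
  have subI: "fa.subspace ?I" unfolding cga_ideal_def by simp
  have ind0: "\<not> fa.dependent ?B0"
  proof
    assume "fa.dependent ?B0"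
    then obtain u where u: "\<exists>v\<in>?B0. u v \<noteq> 0" "(\<Sum>v\<in>?B0. fa_scale (u v) v) = 0"
      using fa.dependent_finite[OF fB0] by auto
    from u(1) obtain T where T: "T \<in> Kset n E" "u (dl (nw T)) \<noteq> 0" by auto
    have "coef E T (\<Sum>v\<in>?B0. fa_scale (u v) v) = u (dl (nw T))" by (rule coef_B0[OF T(1)])
    then show False using u(2) T(2) coef_zero by metis
  qed
  have spI0: "fa.span ?B0 \<inter> ?I = {0}"
  proof
    show "{0} \<subseteq> fa.span ?B0 \<inter> ?I" using fa.span_zero I_zero by auto
    show "fa.span ?B0 \<inter> ?I \<subseteq> {0}"
    proof
      fix q assume q: "q \<in> fa.span ?B0 \<inter> ?I"
      then obtain c where qc: "q = (\<Sum>v\<in>?B0. fa_scale (c v) v)"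
        using fa.span_finite[OF fB0] by auto
      have "c v = 0" if v: "v \<in> ?B0" for v
      proof -
        from v obtain T where T: "T \<in> Kset n E" "v = dl (nw T)" by auto
        have "coef E T q = 0" using ideal_coef[OF assms] q by blast
        then show ?thesis using coef_B0[OF T(1), of c] qc T(2) by simp
      qed
      then have "q = 0" unfolding qc by (intro sum.neutral) simp
      thus "q \<in> {0}" by simp
    qed
  qed
  have sub0: "?B0 \<subseteq> ?C" using B0_center[OF assms] by auto
  have "card (Kset n E) = card ?B0 \<and> ?B0 \<subseteq> ?C \<and> finite ?B0 \<and> \<not> fa.dependent ?B0 \<and> fa.span ?B0 \<inter> ?I = {0}"
    using sub0 ind0 spI0 fB0 cB0 by simp
  then have mem: "card (Kset n E) \<in> ?X" by blast
  have bound: "x \<le> card (Kset n E)" if "x \<in> ?X" for x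
  proof -
    from that obtain B where B: "x = card B" "B \<subseteq> ?C" "finite B" "\<not> fa.dependent B" "fa.span B \<inter> ?I = {0}"
      by blast
    let ?f = "\<lambda>b. \<Sum>T\<in>Kset n E. fa_scale (coef E T b) (dl (nw T))"
    have hf: "?f b \<in> fa.span ?B0 \<and> b - ?f b \<in> ?I" if b: "b \<in> B" for b
    proof
      show "?f b \<in> fa.span ?B0" by (intro fa.span_sum fa.span_scale fa.span_base) auto
      have bC: "b \<in> free_alg n" "\<forall>y\<in>free_alg n. fa_mult b y - fa_mult y b \<in> ?I"
        using b B(2) unfolding cga_center_lift_def by auto
      have "(\<Sum>T\<in>Pow {..<n}. fa_scale (coef E T b) (dl (nw T))) = ?f b"
      proof (rule sum.mono_neutral_right)
        show "finite (Pow {..<n})" by simp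
        show "Kset n E \<subseteq> Pow {..<n}" unfolding Kset_def by auto
        show "\<forall>T\<in>Pow {..<n} - Kset n E. fa_scale (coef E T b) (dl (nw T)) = 0"
        proof
          fix T assume T: "T \<in> Pow {..<n} - Kset n E"
          then obtain i where i: "i < n" "odd (card {j\<in>T. E i j})" unfolding Kset_def by auto
          have "finite T" using T by (auto intro: finite_subset)
          then have "coef E T b = 0" using center_coef[OF assms bC(1) bC(2) i] by simp
          thus "fa_scale (coef E T b) (dl (nw T)) = 0" by (simp add: fun_eq_iff)
        qed
      qed
      then show "b - ?f b \<in> ?I" using psi[OF assms bC(1)] by simp
    qed
    have "card B \<le> card ?B0"
      by (rule fa.ub_dim[OF fB0 subI B(3) B(4) B(5), of ?f]) (rule hf)
    thus ?thesis using B(1) cB0 by simp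
  qed
  have "cga_center_dim n E = Sup ?X"
    unfolding cga_center_dim_def quot_dim_def by simp
  also have "\<dots> = card (Kset n E)" using mem bound by (intro cSup_eq_maximum) auto
  finally show ?thesis .
qed




lemma bit_UNIV: "(UNIV :: bit set) = {0, 1}"
  by (auto intro: bit.exhaust)
lemma card_bit: "card (UNIV :: bit set) = 2"
  unfolding bit_UNIV by simp

lemma bit_of_nat: "(of_nat k :: bit) = 0 \<longleftrightarrow> even k"
  by (induct k) (auto simp: add_eq_0_iff_both_eq_0)

context fixes n :: nat
begin
interpretation V: vec_space "TYPE(bit)" n .

lemma rank_same: "V.rank A = vec_space.rank n A" by simp

lemma card_span_indpt:
  assumes U: "U \<subseteq> carrier_vec n" "finite U" "V.lin_indpt U"
  shows "card (V.span U) = 2 ^ card U"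
proof -
  have sp: "V.span U = (\<lambda>a. V.lincomb a U) ` (U \<rightarrow>\<^sub>E UNIV)"
  proof
    show "V.span U \<subseteq> (\<lambda>a. V.lincomb a U) ` (U \<rightarrow>\<^sub>E UNIV)"
    proof
      fix x assume "x \<in> V.span U"
      then obtain a where a: "x = V.lincomb a U" using V.finite_span[OF U(2)] U(1) by auto
      have "V.lincomb a U = V.lincomb (restrict a U) U"
        by (rule V.lincomb_cong) (use U in auto)
      thus "x \<in> (\<lambda>a. V.lincomb a U) ` (U \<rightarrow>\<^sub>E UNIV)" using a by auto
    qed
    show "(\<lambda>a. V.lincomb a U) ` (U \<rightarrow>\<^sub>E UNIV) \<subseteq> V.span U"
      using V.finite_span[OF U(2)] U(1) by auto
  qed
  have inj: "inj_on (\<lambda>a. V.lincomb a U) (U \<rightarrow>\<^sub>E UNIV)"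
  proof (rule inj_onI)
    fix a b assume a: "a \<in> U \<rightarrow>\<^sub>E UNIV" and b: "b \<in> U \<rightarrow>\<^sub>E UNIV" and e: "V.lincomb a U = V.lincomb b U"
    have "\<forall>v\<in>U. a v = b v"
    proof (rule ccontr)
      assume "\<not> (\<forall>v\<in>U. a v = b v)"
      then obtain v where v: "v \<in> U" "a v \<noteq> b v" by auto
      let ?c = "\<lambda>x. a x - b x"
      have "V.lincomb ?c U = 0\<^sub>v n"
      proof (rule eq_vecI)
        show "dim_vec (V.lincomb ?c U) = dim_vec (0\<^sub>v n)" using V.lincomb_dim[OF U(2,1)] by simp
        fix i assume "i < dim_vec (0\<^sub>v n)"
        then have i: "i < n" by simp
        have "V.lincomb ?c U $ i = (\<Sum>x\<in>U. a x * x $ i) - (\<Sum>x\<in>U. b x * x $ i)"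
          unfolding V.lincomb_index[OF i U(1)] by (simp only: left_diff_distrib sum_subtractf)
        also have "\<dots> = 0"
        proof -
          have "(\<Sum>x\<in>U. a x * x $ i) = (\<Sum>x\<in>U. b x * x $ i)"
            using arg_cong[OF e, of "\<lambda>w. w $ i"] unfolding V.lincomb_index[OF i U(1)] .
          thus ?thesis by (simp only: diff_self)
        qed
        finally show "V.lincomb ?c U $ i = 0\<^sub>v n $ i" using i by simp
      qed
      then have "V.lin_dep U"
        by (intro V.lin_dep_crit[where A=U and S=U and a="?c" and v=v]) (use U v in auto)
      thus False using U(3) by simp
    qed
    thus "a = b" using a b by (auto intro: extensionalityI[of a U b] simp: PiE_def)
  qed
  have "card (V.span U) = card (U \<rightarrow>\<^sub>E (UNIV :: bit set))"
    unfolding sp by (rule card_image[OF inj])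
  also have "\<dots> = 2 ^ card U" using U(2) by (simp add: card_PiE card_bit)
  finally show ?thesis .
qed


lemma card_colspace:
  assumes A: "A \<in> carrier_mat n n"
  shows "card (V.span (set (cols A))) = 2 ^ V.rank A"
proof -
  let ?P = "\<lambda>T. T \<subseteq> set (cols A) \<and> V.lin_indpt T"
  have P0: "?P {}" unfolding V.lin_dep_def by simp
  obtain U where U: "finite U" "maximal U ?P"
    using maximal_exists_superset[of "set (cols A)" ?P "{}"] P0 by auto
  have r: "V.rank A = card U" by (rule V.rank_card_indpt[OF A U(2)])
  have colsC: "set (cols A) \<subseteq> carrier_vec n" using A cols_dim[of A] by auto
  have SP: "U \<subseteq> set (cols A)" "V.lin_indpt U" using U(2) by (auto simp: maximal_def)
  have UC: "U \<subseteq> carrier_vec n" using SP(1) colsC by auto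
  have "V.span U = V.span (set (cols A))"
  proof (rule ccontr)
    assume ne: "V.span U \<noteq> V.span (set (cols A))"
    have "V.span U \<subseteq> V.span (set (cols A))" using V.span_is_monotone SP(1) by metis
    have "\<not> set (cols A) \<subseteq> V.span U"
    proof
      assume "set (cols A) \<subseteq> V.span U"
      then have "V.span (set (cols A)) \<subseteq> V.span U"
        by (rule V.span_is_subset[OF _ V.span_is_submodule[OF UC]])
      thus False using ne \<open>V.span U \<subseteq> V.span (set (cols A))\<close> by blast
    qed
    then obtain s where s: "s \<in> set (cols A)" "s \<notin> V.span U" by blast
    have sC: "s \<in> carrier_vec n" using s colsC by auto
    have sU: "s \<notin> U" using s(2) V.in_own_span[OF UC] by auto
    have "V.lin_indpt (U \<union> {s})" using V.lin_dep_iff_in_span[OF _ SP(2), of s] UC sC sU s(2) by auto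
    then have "?P (U \<union> {s})" using SP s by auto
    then have "U \<union> {s} = U" using U(2) unfolding maximal_def by blast
    thus False using sU by auto
  qed
  then show ?thesis using card_span_indpt[OF UC U(1) SP(2)] r by simp
qed

definition phi :: "nat set \<Rightarrow> bit vec" where
  "phi S = vec n (\<lambda>j. if j \<in> S then 1 else 0)"

lemma bij_phi: "bij_betw phi (Pow {..<n}) (carrier_vec n)"
proof (rule bij_betw_imageI)
  show "inj_on phi (Pow {..<n})"
  proof (rule inj_onI)
    fix S T assume S: "S \<in> Pow {..<n}" and T: "T \<in> Pow {..<n}" and e: "phi S = phi T"
    have "j \<in> S \<longleftrightarrow> j \<in> T" if j: "j < n" for j
    proof -
      have "(if j \<in> S then 1 else 0 :: bit) = (if j \<in> T then 1 else 0)"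
        using arg_cong[OF e, of "\<lambda>v. v $ j"] j unfolding phi_def by simp
      thus ?thesis by (cases "j \<in> S"; cases "j \<in> T") simp_all
    qed
    thus "S = T" using S T by blast
  qed
  show "phi ` Pow {..<n} = carrier_vec n"
  proof
    show "phi ` Pow {..<n} \<subseteq> carrier_vec n"
    proof
      fix x assume "x \<in> phi ` Pow {..<n}"
      then obtain S where "x = phi S" by blast
      thus "x \<in> carrier_vec n" unfolding phi_def by simp
    qed
    show "carrier_vec n \<subseteq> phi ` Pow {..<n}"
    proof
      fix v :: "bit vec" assume v: "v \<in> carrier_vec n"
      let ?S = "{j. j < n \<and> v $ j = 1}"
      have "phi ?S = v"
      proof (rule eq_vecI)
        show "dim_vec (phi ?S) = dim_vec v" using v unfolding phi_def by simp
        fix i assume "i < dim_vec v" then have i: "i < n" using v by simp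
        have "phi ?S $ i = (if v $ i = 1 then 1 else 0)" using i unfolding phi_def by simp
        then show "phi ?S $ i = v $ i" by (cases "v $ i") simp_all
      qed
      moreover have "?S \<in> Pow {..<n}" by blast
      ultimately show "v \<in> phi ` Pow {..<n}" using rev_image_eqI[of ?S "Pow {..<n}" v phi] by simp
    qed
  qed
qed

lemma card_carrier: "card (carrier_vec n :: bit vec set) = 2 ^ n"
  using bij_betw_same_card[OF bij_phi] by (simp add: card_Pow)

lemma card_ker:
  assumes A: "A \<in> carrier_mat n n"
  shows "card {x \<in> carrier_vec n. A *\<^sub>v x = 0\<^sub>v n} * 2 ^ V.rank A = 2 ^ n"
proof -
  let ?K = "{x \<in> carrier_vec n. A *\<^sub>v x = 0\<^sub>v n}"
  let ?Im = "(\<lambda>x. A *\<^sub>v x) ` carrier_vec n"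
  let ?F = "\<lambda>y. {x \<in> carrier_vec n. A *\<^sub>v x = y}"
  have "?Im = {y\<in>carrier_vec n. \<exists>x\<in>carrier_vec n. A *\<^sub>v x = y}"
  proof
    show "?Im \<subseteq> {y\<in>carrier_vec n. \<exists>x\<in>carrier_vec n. A *\<^sub>v x = y}" using A by auto
    show "{y\<in>carrier_vec n. \<exists>x\<in>carrier_vec n. A *\<^sub>v x = y} \<subseteq> ?Im" by blast
  qed
  also have "\<dots> = V.span (set (cols A))"
    using V.col_space_eq[OF A] A unfolding V.col_space_def by simp
  finally have Im: "?Im = V.span (set (cols A))" .
  have fibers: "card (?F y) = card ?K" if y: "y \<in> ?Im" for y
  proof -
    from y obtain x0 where x0: "x0 \<in> carrier_vec n" "A *\<^sub>v x0 = y" by (rule imageE) simp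
    have yc: "y \<in> carrier_vec n" unfolding x0(2)[symmetric] by (rule mult_mat_vec_carrier[OF A x0(1)])
    have dx0: "dim_vec x0 = n" using x0(1) by simp
    have "?F y = (\<lambda>k. k + x0) ` ?K"
    proof
      show "(\<lambda>k. k + x0) ` ?K \<subseteq> ?F y"
      proof
        fix z assume "z \<in> (\<lambda>k. k + x0) ` ?K"
        then obtain k where k: "k \<in> carrier_vec n" "A *\<^sub>v k = 0\<^sub>v n" "z = k + x0" by blast
        have "A *\<^sub>v z = A *\<^sub>v k + A *\<^sub>v x0" unfolding k(3) by (rule mult_add_distrib_mat_vec[OF A k(1) x0(1)])
        also have "\<dots> = 0\<^sub>v n + y" unfolding k(2) x0(2) ..
        also have "\<dots> = y" by (rule left_zero_vec[OF yc])
        finally have "A *\<^sub>v z = y" .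
        moreover have "z \<in> carrier_vec n" unfolding k(3) using k(1) x0(1) by (rule add_carrier_vec)
        ultimately show "z \<in> ?F y" by blast
      qed
      show "?F y \<subseteq> (\<lambda>k. k + x0) ` ?K"
      proof
        fix z assume z: "z \<in> ?F y"
        have zc: "z \<in> carrier_vec n" and zy: "A *\<^sub>v z = y" using z by auto
        have "A *\<^sub>v (z - x0) = A *\<^sub>v z - A *\<^sub>v x0" by (rule mult_minus_distrib_mat_vec[OF A zc x0(1)])
        also have "\<dots> = y - y" unfolding zy x0(2) ..
        also have "\<dots> = 0\<^sub>v n" by (rule minus_cancel_vec[OF yc])
        finally have "A *\<^sub>v (z - x0) = 0\<^sub>v n" .
        moreover have "z - x0 \<in> carrier_vec n" using zc x0(1) by (rule minus_carrier_vec)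
        ultimately have kin: "z - x0 \<in> ?K" by blast
        have "z = (z - x0) + x0"
        proof (rule eq_vecI)
          fix i assume "i < dim_vec (z - x0 + x0)"
          then have i: "i < dim_vec x0" by simp
          have "(z - x0 + x0) $ i = (z - x0) $ i + x0 $ i" using i by (rule index_add_vec(1))
          also have "\<dots> = (z $ i - x0 $ i) + x0 $ i" using i by (subst index_minus_vec(1)) auto
          also have "\<dots> = z $ i" by (rule diff_add_cancel)
          finally show "z $ i = (z - x0 + x0) $ i" by simp
        next
          show "dim_vec z = dim_vec (z - x0 + x0)" using zc dx0 by simp
        qed
        with kin show "z \<in> (\<lambda>k. k + x0) ` ?K" by blast
      qed
    qed
    moreover have "inj_on (\<lambda>k. k + x0) ?K"
    proof (rule inj_onI)
      fix a b assume ab: "a \<in> ?K" "b \<in> ?K" "a + x0 = b + x0"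
      show "a = b"
      proof (rule eq_vecI)
        show "dim_vec a = dim_vec b" using ab(1,2) by (metis carrier_vecD mem_Collect_eq)
        fix i assume "i < dim_vec b"
        then have i: "i < dim_vec x0" using ab(2) dx0 by (metis carrier_vecD mem_Collect_eq)
        have "(a + x0) $ i = (b + x0) $ i" using ab(3) by (rule arg_cong)
        then have "a $ i + x0 $ i = b $ i + x0 $ i"
          by (simp only: index_add_vec(1)[OF i])
        then show "a $ i = b $ i" by (rule add_right_imp_eq)
      qed
    qed
    ultimately show ?thesis by (simp add: card_image)
  qed
  have fin: "finite (carrier_vec n :: bit vec set)" using bij_betw_finite[OF bij_phi] by simp
  have cu: "carrier_vec n = (\<Union>y\<in>?Im. ?F y)" by blast
  have "card (\<Union>y\<in>?Im. ?F y) = (\<Sum>y\<in>?Im. card (?F y))"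
  proof (rule card_UN_disjoint)
    show "finite ?Im" using fin by simp
    show "\<forall>y\<in>?Im. finite (?F y)" using fin by auto
    show "\<forall>y\<in>?Im. \<forall>z\<in>?Im. y \<noteq> z \<longrightarrow> ?F y \<inter> ?F z = {}" by blast
  qed
  then have "card (carrier_vec n :: bit vec set) = (\<Sum>y\<in>?Im. card (?F y))"
    using cu by simp
  also have "\<dots> = (\<Sum>y\<in>?Im. card ?K)" using fibers by simp
  also have "\<dots> = card ?Im * card ?K" by simp
  finally show ?thesis unfolding card_carrier Im card_colspace[OF A] by simp
qed


lemma adj_phi_index:
  assumes S: "S \<subseteq> {..<n}" and i: "i < n"
  shows "(adj_mat_F2 n E *\<^sub>v phi S) $ i = of_nat (card {j\<in>S. E i j})"
proof -
  have "(adj_mat_F2 n E *\<^sub>v phi S) $ i = row (adj_mat_F2 n E) i \<bullet> phi S"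
    using i by (simp add: adj_mat_F2_def)
  also have "\<dots> = (\<Sum>j\<in>{0..<n}. of_bool (E i j \<and> j \<in> S))"
    unfolding scalar_prod_def using i by (intro sum.cong) (auto simp: adj_mat_F2_def phi_def)
  also have "\<dots> = of_nat (card ({0..<n} \<inter> {j. E i j \<and> j \<in> S}))"
    by simp
  also have "{0..<n} \<inter> {j. E i j \<and> j \<in> S} = {j\<in>S. E i j}" using S by auto
  finally show ?thesis .
qed

lemma adj_carrier: "adj_mat_F2 n E \<in> carrier_mat n n"
  by (simp add: adj_mat_F2_def)

lemma phi_ker_iff:
  assumes S: "S \<subseteq> {..<n}"
  shows "adj_mat_F2 n E *\<^sub>v phi S = 0\<^sub>v n \<longleftrightarrow> (\<forall>i<n. even (card {j\<in>S. E i j}))"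
proof
  assume h: "adj_mat_F2 n E *\<^sub>v phi S = 0\<^sub>v n"
  show "\<forall>i<n. even (card {j\<in>S. E i j})"
  proof (intro allI impI)
    fix i assume i: "i < n"
    have "(adj_mat_F2 n E *\<^sub>v phi S) $ i = 0" using h i by simp
    then show "even (card {j\<in>S. E i j})" using adj_phi_index[OF S i] bit_of_nat by metis
  qed
next
  assume h: "\<forall>i<n. even (card {j\<in>S. E i j})"
  show "adj_mat_F2 n E *\<^sub>v phi S = 0\<^sub>v n"
  proof (rule eq_vecI)
    show "dim_vec (adj_mat_F2 n E *\<^sub>v phi S) = dim_vec (0\<^sub>v n)" by (simp add: adj_mat_F2_def)
    fix i assume "i < dim_vec (0\<^sub>v n)"
    then have i: "i < n" by simp
    have "(adj_mat_F2 n E *\<^sub>v phi S) $ i = 0" using adj_phi_index[OF S i] bit_of_nat h i by metis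
    then show "(adj_mat_F2 n E *\<^sub>v phi S) $ i = 0\<^sub>v n $ i" using i by simp
  qed
qed

definition KsetB :: "(nat \<Rightarrow> nat \<Rightarrow> bool) \<Rightarrow> nat set set" where
  "KsetB E = {S. S \<subseteq> {..<n} \<and> (\<forall>i<n. even (card {j\<in>S. E i j}))}"

lemma card_KsetB: "card (KsetB E) = 2 ^ (n - vec_space.rank n (adj_mat_F2 n E))"
proof -
  let ?A = "adj_mat_F2 n E"
  let ?K = "{x \<in> carrier_vec n. ?A *\<^sub>v x = 0\<^sub>v n}"
  have img: "phi ` KsetB E = ?K"
  proof
    show "phi ` KsetB E \<subseteq> ?K"
    proof
      fix x assume "x \<in> phi ` KsetB E"
      then obtain S where S: "S \<in> KsetB E" "x = phi S" by blast
      have "phi S \<in> carrier_vec n" using bij_betw_apply[OF bij_phi] S(1) unfolding KsetB_def by blast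
      moreover have "?A *\<^sub>v phi S = 0\<^sub>v n" using phi_ker_iff[of S E] S(1) unfolding KsetB_def by blast
      ultimately show "x \<in> ?K" using S(2) by blast
    qed
    show "?K \<subseteq> phi ` KsetB E"
    proof
      fix x assume x: "x \<in> ?K"
      then have "x \<in> phi ` Pow {..<n}" using bij_betw_imp_surj_on[OF bij_phi] by blast
      then obtain S where S: "S \<subseteq> {..<n}" "x = phi S" by blast
      have "\<forall>i<n. even (card {j\<in>S. E i j})" using phi_ker_iff[OF S(1), of E] x S(2) by blast
      then have "S \<in> KsetB E" using S(1) unfolding KsetB_def by blast
      thus "x \<in> phi ` KsetB E" using S(2) by blast
    qed
  qed
  have bij: "bij_betw phi (KsetB E) ?K"
    by (rule bij_betw_subset[OF bij_phi _ img]) (auto simp: KsetB_def)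
  have ck: "card (KsetB E) = card ?K" using bij_betw_same_card[OF bij] .
  have r: "vec_space.rank n ?A \<le> n"
    using V.rank_le_nc[OF adj_carrier] by simp
  have "card ?K * 2 ^ vec_space.rank n ?A = 2 ^ (n - vec_space.rank n ?A) * 2 ^ vec_space.rank n ?A"
    using card_ker[OF adj_carrier] r by (simp add: power_add[symmetric])
  then show ?thesis using ck by simp
qed

lemma rank_le_n: "vec_space.rank n (adj_mat_F2 n E) \<le> n"
  using V.rank_le_nc[OF adj_carrier] by simp

end

theorem mainTheorem5:
  fixes n :: nat and E1 E2 :: "nat \<Rightarrow> nat \<Rightarrow> bool"
  assumes "simple_graph n E1" and "simple_graph n E2"
  shows "cga_center_dim n E1 = cga_center_dim n E2 \<longleftrightarrow>
         vec_space.rank n (adj_mat_F2 n E1) = vec_space.rank n (adj_mat_F2 n E2)"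
proof -
  have KK: "Kset n E = KsetB n E" for E unfolding Kset_def KsetB_def by simp
  have d1: "cga_center_dim n E1 = 2 ^ (n - vec_space.rank n (adj_mat_F2 n E1))"
    using center_dim[OF simple_symG[OF assms(1)]] card_KsetB[of n E1] KK by simp
  have d2: "cga_center_dim n E2 = 2 ^ (n - vec_space.rank n (adj_mat_F2 n E2))"
    using center_dim[OF simple_symG[OF assms(2)]] card_KsetB[of n E2] KK by simp
  have r1: "vec_space.rank n (adj_mat_F2 n E1) \<le> n" by (rule rank_le_n)
  have r2: "vec_space.rank n (adj_mat_F2 n E2) \<le> n" by (rule rank_le_n)
  have "(2::nat) ^ (n - vec_space.rank n (adj_mat_F2 n E1)) = 2 ^ (n - vec_space.rank n (adj_mat_F2 n E2))
     \<longleftrightarrow> n - vec_space.rank n (adj_mat_F2 n E1) = n - vec_space.rank n (adj_mat_F2 n E2)"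
    by (rule power_inject_exp) simp
  also have "\<dots> \<longleftrightarrow> vec_space.rank n (adj_mat_F2 n E1) = vec_space.rank n (adj_mat_F2 n E2)"
    using r1 r2 by linarith
  finally show ?thesis unfolding d1 d2 .
qed

end
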